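(* Let $P(k)=C_{p0}T_{p0}^k-C_mT_m^k$ be a high pair function (so $C_{p0},C_m>0$ and $0<T_m<T_{p0}<1$), and let $C_{pi}>0$, $T_{pi}$ with $T_m<T_{pi}<1$, $i=1,\dots,N$. Then the total function $S(k)=P(k)+\sum_{i=1}^N C_{pi}T_{pi}^k$ has exactly one point of abscissa intersection, exactly one maximum and exactly one inflection point; it is concave to the left of the inflection point and convex to the right of it, and $S(k)\to 0$ as $k\to\infty$.
   Context: A high pair function is $C_pT_p^k-C_mT_m^k$ with $C_p,C_m>0$ and $0<T_m<T_p<1$, real variable $k$. *)

theory Defs
  imports "HOL-Analysis.Analysis"
begin

definition total_fun :: "real \<Rightarrow> real \<Rightarrow> real \<Rightarrow> real \<Rightarrow> nat \<Rightarrow> (nat \<Rightarrow> real) \<Rightarrow> (nat \<Rightarrow> real) \<Rightarrow> real \<Rightarrow> real" where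
  "total_fun Cp0 Tp0 Cm Tm N Cp Tp k =
     Cp0 * Tp0 powr k - Cm * Tm powr k + (\<Sum>i=1..N. Cp i * Tp i powr k)"

definition local_max_point :: "(real \<Rightarrow> real) \<Rightarrow> real \<Rightarrow> bool" where
  "local_max_point f c \<longleftrightarrow> (\<exists>e>0. \<forall>k. \<bar>k - c\<bar> < e \<longrightarrow> f k \<le> f c)"

definition inflection_point :: "(real \<Rightarrow> real) \<Rightarrow> real \<Rightarrow> bool" where
  "inflection_point f c \<longleftrightarrow> (\<exists>e>0.
     ((\<forall>k\<in>{c-e<..<c}. deriv (deriv f) k < 0) \<and> (\<forall>k\<in>{c<..<c+e}. deriv (deriv f) k > 0)) \<or>
     ((\<forall>k\<in>{c-e<..<c}. deriv (deriv f) k > 0) \<and> (\<forall>k\<in>{c<..<c+e}. deriv (deriv f) k < 0)))"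

end

theory Submission imports Defs begin

definition DD :: "(nat\<Rightarrow>real) \<Rightarrow> (nat\<Rightarrow>real) \<Rightarrow> nat \<Rightarrow> real \<Rightarrow> real \<Rightarrow> nat \<Rightarrow> real \<Rightarrow> real" where
"DD C l N Cm lm n k = (\<Sum>i=0..N. C i * l i ^ n * exp (k * l i)) - Cm * lm ^ n * exp (k * lm)"

lemma DD_deriv: "(DD C l N Cm lm n has_real_derivative DD C l N Cm lm (Suc n) k) (at k)"
  unfolding DD_def
  by (auto intro!: derivative_eq_intros DERIV_sum simp: algebra_simps)

lemma cross:
  fixes A :: "real \<Rightarrow> real"
  assumes cont: "\<And>x. isCont A x" and mono: "\<And>x y. x<y \<Longrightarrow> A x < A y"
    and "A a < B" "B < A b"
  shows "\<exists>z. \<forall>k. (A k < B \<longleftrightarrow> k < z) \<and> (A k = B \<longleftrightarrow> k = z) \<and> (A k > B \<longleftrightarrow> k > z)"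
proof -
  have "a \<le> b"
  proof (rule ccontr)
    assume "\<not> a \<le> b" then have "A b < A a" using mono by simp
    with assms(3,4) show False by simp
  qed
  then obtain z where z: "A z = B" using IVT[of A a B b] assms by (auto intro: less_imp_le)
  show ?thesis
    by (rule exI[of _ z]) (metis z mono linorder_neq_iff order.asym)
qed

lemma exp_bot: "(d::real) > 0 \<Longrightarrow> ((\<lambda>k. exp (k*d)) \<longlongrightarrow> 0) at_bot"
proof -
  assume d: "d > 0"
  have "filterlim (\<lambda>k. d * k) at_bot at_bot"
    by (rule filterlim_tendsto_pos_mult_at_bot[OF tendsto_const d filterlim_ident])
  from filterlim_compose[OF exp_at_bot this] show ?thesis by (simp add: mult.commute)
qed
lemma exp_top: "(d::real) > 0 \<Longrightarrow> filterlim (\<lambda>k. exp (k*d)) at_top at_top"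
proof -
  assume d: "d > 0"
  have "filterlim (\<lambda>k. d * k) at_top at_top"
    by (rule filterlim_tendsto_pos_mult_at_top[OF tendsto_const d filterlim_ident])
  from filterlim_compose[OF exp_at_top this] show ?thesis by (simp add: mult.commute)
qed
lemma exp_top0: "(d::real) < 0 \<Longrightarrow> ((\<lambda>k. exp (k*d)) \<longlongrightarrow> 0) at_top"
proof -
  assume d: "d < 0"
  have "filterlim (\<lambda>k. d * k) at_bot at_top"
    by (rule filterlim_tendsto_neg_mult_at_bot[OF tendsto_const d filterlim_ident])
  from filterlim_compose[OF exp_at_bot this] show ?thesis by (simp add: mult.commute)
qed

lemma sign_DD:
  fixes C l :: "nat \<Rightarrow> real"
  assumes C: "\<And>i. i \<le> N \<Longrightarrow> C i > 0" and l: "\<And>i. i \<le> N \<Longrightarrow> lm < l i \<and> l i < 0"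
    and Cm: "Cm > 0"
  shows "\<exists>z. \<forall>k. ((-1)^n * DD C l N Cm lm n k < 0 \<longleftrightarrow> k < z) \<and>
     ((-1)^n * DD C l N Cm lm n k = 0 \<longleftrightarrow> k = z) \<and> ((-1)^n * DD C l N Cm lm n k > 0 \<longleftrightarrow> k > z)"
proof -
  have lm: "lm < 0" using l[of 0] by auto
  define A where "A k = (\<Sum>i=0..N. C i * \<bar>l i\<bar>^n * exp (k * (l i - lm)))" for k
  define B where "B = Cm * \<bar>lm\<bar>^n"
  have Bpos: "B > 0" using Cm lm unfolding B_def by auto
  have eq: "(-1)^n * DD C l N Cm lm n k = exp (k*lm) * (A k - B)" for k
  proof -
    have t: "(-1)^n * (C i * l i ^ n * exp (k * l i)) = exp (k*lm) * (C i * \<bar>l i\<bar>^n * exp (k * (l i - lm)))"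
      if "i \<in> {0..N}" for i
    proof -
      have "\<bar>l i\<bar> = - l i" using l[of i] that by auto
      moreover have "exp (k*lm) * exp (k * (l i - lm)) = exp (k * l i)"
        by (simp add: exp_add[symmetric] algebra_simps)
      ultimately show ?thesis by (simp add: power_minus[symmetric] algebra_simps)
         (metis mult.commute mult.left_commute power_minus)
    qed
    have "(-1)^n * DD C l N Cm lm n k = (\<Sum>i=0..N. (-1)^n * (C i * l i ^ n * exp (k * l i)))
        - Cm * ((-1)^n * lm ^ n) * exp (k * lm)"
      unfolding DD_def by (simp add: sum_distrib_left algebra_simps)
    also have "\<dots> = (\<Sum>i=0..N. exp (k*lm) * (C i * \<bar>l i\<bar>^n * exp (k * (l i - lm)))) - exp (k*lm) * B"
      using lm unfolding B_def by (simp add: t power_minus[symmetric])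
    also have "\<dots> = exp (k*lm) * (A k - B)"
      unfolding A_def by (simp add: sum_distrib_left algebra_simps)
    finally show ?thesis .
  qed
  have cont: "isCont A x" for x unfolding A_def by (intro continuous_intros)
  have mono: "A x < A y" if "x < y" for x y
    unfolding A_def
  proof (rule sum_strict_mono)
    fix i assume i: "i \<in> {0..N}"
    have p: "C i * \<bar>l i\<bar>^n > 0" using C[of i] l[of i] i by auto
    have q: "exp (x * (l i - lm)) < exp (y * (l i - lm))" using l[of i] i that by auto
    show "C i * \<bar>l i\<bar>^n * exp (x * (l i - lm)) < C i * \<bar>l i\<bar>^n * exp (y * (l i - lm))"
      by (rule mult_strict_left_mono[OF q p])
  qed auto
  have "(A \<longlongrightarrow> 0) at_bot"
  proof -
    have "((\<lambda>k. \<Sum>i=0..N. C i * \<bar>l i\<bar>^n * exp (k * (l i - lm))) \<longlongrightarrow> (\<Sum>i=0..N. C i * \<bar>l i\<bar>^n * 0)) at_bot"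
      by (intro tendsto_sum tendsto_mult tendsto_const exp_bot) (use l in auto)
    then show ?thesis unfolding A_def by simp
  qed
  then have "eventually (\<lambda>k. A k < B) at_bot" using Bpos by (intro order_tendstoD(2)) auto
  then obtain a where a: "A a < B" by (metis eventually_at_bot_linorder order_refl)
  have "filterlim (\<lambda>k. C 0 * \<bar>l 0\<bar>^n * exp (k * (l 0 - lm))) at_top at_top"
    using C[of 0] l[of 0]
    by (intro filterlim_tendsto_pos_mult_at_top[OF tendsto_const] exp_top) auto
  then have "eventually (\<lambda>k. B + 1 \<le> C 0 * \<bar>l 0\<bar>^n * exp (k * (l 0 - lm))) at_top"
    by (simp add: filterlim_at_top)
  then obtain b where b: "B + 1 \<le> C 0 * \<bar>l 0\<bar>^n * exp (b * (l 0 - lm))"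
    by (metis eventually_at_top_linorder order_refl)
  have "C 0 * \<bar>l 0\<bar>^n * exp (b * (l 0 - lm)) \<le> A b"
    unfolding A_def
    by (rule member_le_sum[of 0 "{0..N}" "\<lambda>i. C i * \<bar>l i\<bar>^n * exp (b * (l i - lm))"])
       (use C in \<open>auto simp: less_imp_le\<close>)
  with b have "B < A b" by linarith
  from cross[OF cont mono a this] obtain z where
    z: "\<forall>k. (A k < B \<longleftrightarrow> k < z) \<and> (A k = B \<longleftrightarrow> k = z) \<and> (A k > B \<longleftrightarrow> k > z)" by blast
  show ?thesis
  proof (rule exI[of _ z], intro allI)
    fix k
    have e: "exp (k*lm) > 0" by simp
    show "((-1)^n * DD C l N Cm lm n k < 0 \<longleftrightarrow> k < z) \<and>
     ((-1)^n * DD C l N Cm lm n k = 0 \<longleftrightarrow> k = z) \<and> ((-1)^n * DD C l N Cm lm n k > 0 \<longleftrightarrow> k > z)"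
      unfolding eq using z[rule_format, of k] e
      by (simp add: mult_less_0_iff zero_less_mult_iff)
  qed
qed


lemma incr_gen:
  assumes d: "\<And>k. (f has_real_derivative f' k) (at k)" and pos: "\<And>k. a < k \<Longrightarrow> k < b \<Longrightarrow> f' k > 0"
    and "a < b"
  shows "f a < f b"
proof -
  obtain x where x: "a < x" "x < b" "f b - f a = (b - a) * f' x"
    using MVT2[OF \<open>a<b\<close>, of f f'] d by blast
  have "f' x > 0" using pos x by auto
  then have "(b - a) * f' x > 0" using \<open>a<b\<close> by simp
  then show ?thesis using x(3) by linarith
qed

lemma decr_gen:
  assumes d: "\<And>k. (f has_real_derivative f' k) (at k)" and neg: "\<And>k. a < k \<Longrightarrow> k < b \<Longrightarrow> f' k < 0"
    and "a < b"
  shows "f b < f a"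
proof -
  obtain x where x: "a < x" "x < b" "f b - f a = (b - a) * f' x"
    using MVT2[OF \<open>a<b\<close>, of f f'] d by blast
  have "f' x < 0" using neg x by auto
  then have "(b - a) * f' x < 0" using \<open>a<b\<close> by (simp add: mult_pos_neg)
  then show ?thesis using x(3) by linarith
qed

theorem lemma3:
  fixes Cp0 Tp0 Cm Tm :: real and N :: nat and Cp Tp :: "nat \<Rightarrow> real"
  assumes "Cp0 > 0" and "Cm > 0" and "0 < Tm" and "Tm < Tp0" and "Tp0 < 1"
    and "\<And>i. i \<in> {1..N} \<Longrightarrow> Cp i > 0"
    and "\<And>i. i \<in> {1..N} \<Longrightarrow> Tm < Tp i \<and> Tp i < 1"
  defines "S \<equiv> total_fun Cp0 Tp0 Cm Tm N Cp Tp"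
  shows "(\<exists>!k. S k = 0)
    \<and> (\<exists>!k. local_max_point S k)
    \<and> (\<exists>!c. inflection_point S c)
    \<and> (\<forall>c. inflection_point S c \<longrightarrow> concave_on {..c} S \<and> convex_on {c..} S)
    \<and> (S \<longlongrightarrow> 0) at_top"
proof -
  define C where "C i = (if i = 0 then Cp0 else Cp i)" for i
  define T where "T i = (if i = 0 then Tp0 else Tp i)" for i
  define l where "l i = ln (T i)" for i
  define lm where "lm = ln Tm"
  define D where "D = DD C l N Cm lm"
  have CT: "C i > 0 \<and> Tm < T i \<and> T i < 1" if "i \<le> N" for i
    using assms(1-7) that unfolding C_def T_def by (cases "i = 0") auto
  have Cpos: "C i > 0" if "i \<le> N" for i using CT[OF that] by simp
  have lpos: "lm < l i \<and> l i < 0" if "i \<le> N" for i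
    using CT[OF that] assms(3) unfolding l_def lm_def by auto
  have hS: "S = D 0"
  proof
    fix k
    have "S k = Cp0 * Tp0 powr k - Cm * Tm powr k + (\<Sum>i=1..N. Cp i * Tp i powr k)"
      unfolding S_def total_fun_def by simp
    also have "\<dots> = (\<Sum>i=0..N. C i * exp (k * l i)) - Cm * exp (k * lm)"
    proof -
      have "(\<Sum>i=0..N. C i * exp (k * l i)) = C 0 * exp (k * l 0) + (\<Sum>i=Suc 0..N. C i * exp (k * l i))"
        by (rule sum.atLeast_Suc_atMost) simp
      also have "(\<Sum>i=Suc 0..N. C i * exp (k * l i)) = (\<Sum>i=1..N. Cp i * Tp i powr k)"
      proof (rule sum.cong)
        fix i assume i: "i \<in> {1..N}"
        then have "Tp i > 0" using assms(3) assms(7)[of i] by force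
        then show "C i * exp (k * l i) = Cp i * Tp i powr k"
          using i unfolding C_def l_def T_def by (simp add: powr_def mult.commute)
      qed simp
      finally show ?thesis
        using assms(3,4) unfolding C_def l_def T_def lm_def by (simp add: powr_def mult.commute)
    qed
    also have "\<dots> = D 0 k" unfolding D_def DD_def by simp
    finally show "S k = D 0 k" .
  qed
  have hd: "\<And>n k. (D n has_real_derivative D (Suc n) k) (at k)"
    unfolding D_def by (rule DD_deriv)
  have hd1: "deriv S = D 1" unfolding hS
  proof
    fix k show "deriv (D 0) k = D 1 k" using hd[of 0 k] by (simp add: DERIV_imp_deriv)
  qed
  have hd2: "deriv (deriv S) = D 2" unfolding hd1
  proof
    fix k show "deriv (D 1) k = D 2 k" using hd[of 1 k] by (simp add: DERIV_imp_deriv numeral_2_eq_2)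
  qed
  have hdS: "\<And>k. (S has_real_derivative D 1 k) (at k)" unfolding hS using hd[of 0] by simp
  have hd1': "\<And>k. (D 1 has_real_derivative D 2 k) (at k)" using hd[of 1] by (simp add: numeral_2_eq_2)
  have sg: "\<exists>z. \<forall>k. ((-1)^n * D n k < 0 \<longleftrightarrow> k < z) \<and>
     ((-1)^n * D n k = 0 \<longleftrightarrow> k = z) \<and> ((-1)^n * D n k > 0 \<longleftrightarrow> k > z)" for n
    unfolding D_def
    by (rule sign_DD[where C=C and l=l and N=N and lm=lm and Cm=Cm and n=n]) (use Cpos lpos assms(2) in auto)
  obtain z0 where z0: "\<And>k. (D 0 k = 0 \<longleftrightarrow> k = z0)"
    using sg[of 0] by auto
  obtain z1 where z1: "\<And>k. (D 1 k > 0 \<longleftrightarrow> k < z1) \<and> (D 1 k < 0 \<longleftrightarrow> k > z1)"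
  proof -
    from sg[of 1] obtain z where
      "\<forall>k. (- D 1 k < 0 \<longleftrightarrow> k < z) \<and> (- D 1 k = 0 \<longleftrightarrow> k = z) \<and> (- D 1 k > 0 \<longleftrightarrow> k > z)"
      by auto
    then show ?thesis using that[of z] by auto
  qed
  obtain z2 where z2: "\<And>k. (D 2 k < 0 \<longleftrightarrow> k < z2) \<and> (D 2 k > 0 \<longleftrightarrow> k > z2)"
    using sg[of 2] by auto
  have P1: "\<exists>!k. S k = 0" using z0 hS by auto
  have inc: "S a < S b" if "a < b" "b \<le> z1" for a b
    by (rule incr_gen[OF hdS _ that(1)]) (use z1 that in auto)
  have dec: "S b < S a" if "a < b" "z1 \<le> a" for a b
    by (rule decr_gen[OF hdS _ that(1)]) (use z1 that in auto)
  have gmax: "S k \<le> S z1" for k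
    using inc[of k z1] dec[of z1 k] by (cases k z1 rule: linorder_cases) auto
  have P2: "\<exists>!k. local_max_point S k"
  proof (rule ex1I)
    show "local_max_point S z1" unfolding local_max_point_def using gmax zero_less_one by blast
  next
    fix c assume "local_max_point S c"
    then obtain e where e: "e > 0" "\<And>k. \<bar>k - c\<bar> < e \<Longrightarrow> S k \<le> S c"
      unfolding local_max_point_def by blast
    show "c = z1"
    proof (rule ccontr)
      assume "c \<noteq> z1"
      then consider "c < z1" | "c > z1" by linarith
      then show False
      proof cases
        case 1
        define k where "k = c + min e (z1 - c) / 2"
        define m where "m = min e (z1 - c)"
        have m: "m > 0" "m \<le> e" "m \<le> z1 - c" using 1 e(1) unfolding m_def by auto
        have kd: "k = c + m / 2" unfolding k_def m_def by simp
        have "c < k" using m unfolding kd by linarith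
        moreover have "k \<le> z1" using m unfolding kd by linarith
        moreover have "\<bar>k - c\<bar> < e" using m unfolding kd by (simp add: abs_if)
        ultimately show False using inc[of c k] e(2)[of k] by linarith
      next
        case 2
        define k where "k = c - min e (c - z1) / 2"
        define m where "m = min e (c - z1)"
        have m: "m > 0" "m \<le> e" "m \<le> c - z1" using 2 e(1) unfolding m_def by auto
        have kd: "k = c - m / 2" unfolding k_def m_def by simp
        have "k < c" using m unfolding kd by linarith
        moreover have "z1 \<le> k" using m unfolding kd by linarith
        moreover have "\<bar>k - c\<bar> < e" using m unfolding kd by (simp add: abs_if)
        ultimately show False using dec[of k c] e(2)[of k] by linarith
      qed
    qed
  qed
  have infl_unique: "c = z2" if "inflection_point S c" for c
  proof -
    from that obtain e where e: "e > 0" and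
      disj: "((\<forall>k\<in>{c-e<..<c}. D 2 k < 0) \<and> (\<forall>k\<in>{c<..<c+e}. D 2 k > 0)) \<or>
     ((\<forall>k\<in>{c-e<..<c}. D 2 k > 0) \<and> (\<forall>k\<in>{c<..<c+e}. D 2 k < 0))"
      unfolding inflection_point_def hd2 by blast
    show "c = z2"
    proof (rule ccontr)
      assume "c \<noteq> z2"
      then consider "c < z2" | "c > z2" by linarith
      then show False
      proof cases
        case 1
        define m where "m = min e (z2 - c)"
        have m: "m > 0" "m \<le> e" "m \<le> z2 - c" using 1 e unfolding m_def by auto
        have k1: "c - m/2 \<in> {c-e<..<c}" "c + m/2 \<in> {c<..<c+e}" using m by auto
        have "D 2 (c - m/2) < 0" "D 2 (c + m/2) < 0" using z2 m by auto
        moreover have "D 2 (c + m/2) > 0 \<or> D 2 (c - m/2) > 0" using disj k1(1) k1(2) by (elim disjE conjE) (drule bspec, assumption, simp)+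
        ultimately show False by linarith
      next
        case 2
        define m where "m = min e (c - z2)"
        have m: "m > 0" "m \<le> e" "m \<le> c - z2" using 2 e unfolding m_def by auto
        have k1: "c - m/2 \<in> {c-e<..<c}" "c + m/2 \<in> {c<..<c+e}" using m by auto
        have "D 2 (c - m/2) > 0" "D 2 (c + m/2) > 0" using z2 m by auto
        moreover have "D 2 (c - m/2) < 0 \<or> D 2 (c + m/2) < 0" using disj k1(1) k1(2) by (elim disjE conjE) (drule bspec, assumption, simp)+
        ultimately show False by linarith
      qed
    qed
  qed
  have P3: "\<exists>!c. inflection_point S c"
  proof (rule ex1I)
    have l: "\<forall>k\<in>{z2-1<..<z2}. D 2 k < 0" using z2 by auto
    have r: "\<forall>k\<in>{z2<..<z2+1}. D 2 k > 0" using z2 by auto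
    show "inflection_point S z2" unfolding inflection_point_def hd2
      using l r zero_less_one by blast
  qed (rule infl_unique)
  have conc: "concave_on {..z2} S"
    unfolding concave_on_def
  proof (rule convex_on_realI[where f' = "\<lambda>k. - D 1 k"])
    show "connected {..z2}" by simp
    show "\<And>x. x \<in> {..z2} \<Longrightarrow> ((\<lambda>x. - S x) has_real_derivative - D 1 x) (at x)"
      by (intro derivative_intros hdS)
    fix x y assume xy: "x \<in> {..z2}" "y \<in> {..z2}" "x \<le> y"
    show "- D 1 x \<le> - D 1 y"
    proof (cases "x = y")
      case False
      then have "x < y" using xy by simp
      have "D 1 y < D 1 x" by (rule decr_gen[OF hd1' _ \<open>x<y\<close>]) (use z2 xy in auto)
      then show ?thesis by simp
    qed simp
  qed
  have conv: "convex_on {z2..} S"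
  proof (rule convex_on_realI[where f' = "D 1"])
    show "connected {z2..}" by simp
    show "\<And>x. x \<in> {z2..} \<Longrightarrow> (S has_real_derivative D 1 x) (at x)" by (rule hdS)
    fix x y assume xy: "x \<in> {z2..}" "y \<in> {z2..}" "x \<le> y"
    show "D 1 x \<le> D 1 y"
    proof (cases "x = y")
      case False
      then have "x < y" using xy by simp
      have "D 1 x < D 1 y" by (rule incr_gen[OF hd1' _ \<open>x<y\<close>]) (use z2 xy in auto)
      then show ?thesis by simp
    qed simp
  qed
  have P4: "\<forall>c. inflection_point S c \<longrightarrow> concave_on {..c} S \<and> convex_on {c..} S"
    using infl_unique conc conv by blast
  have P5: "(S \<longlongrightarrow> 0) at_top"
  proof -
    have lm0: "lm < 0" using lpos[of 0] by simp
    have "((\<lambda>k. (\<Sum>i=0..N. C i * l i ^ 0 * exp (k * l i)) - Cm * lm ^ 0 * exp (k * lm)) \<longlongrightarrow>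
       (\<Sum>i=0..N. C i * l i ^ 0 * 0) - Cm * lm ^ 0 * 0) at_top"
      by (intro tendsto_diff tendsto_sum tendsto_mult tendsto_const exp_top0)
         (use lpos lm0 in auto)
    then show ?thesis unfolding hS D_def DD_def by simp
  qed
  show ?thesis using P1 P2 P3 P4 P5 by blast
qed

end
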